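(* Let $\kappa$ be a maximal clique of the IDNC graph $\mathcal G$ chosen for transmission at time $t$, and let all quantities without a time index ($\varrho_k,\psi_k$) denote their values at time $t$. Then \[ \mathbb{E}\big[|\mathcal E_\rho^{(t+1)}|\big]=\mathbb{E}\big[|\mathcal E_\rho^{(t)}|\big]-\frac12\sum_{i\in\mathcal T_\rho(\kappa)} q_i\Big(\mathbb{E}\big[\Delta_i^{(t)}\big]+\gamma_i\Big)+\frac12\sum_{i\in\mathcal T(\kappa)}\psi_i\alpha_i+\frac12\sum_{i\notin\mathcal T(\kappa)}\psi_i\beta_i , \] where $\mathbb{E}[\Delta_i^{(t)}]=D_i(\boldsymbol\varrho,\boldsymbol\psi)$ is the expected primary degree of a vertex of receiver $i$ at time $t$ and \[ \alpha_i=\sum_{k\ne i} q_i\xi_k-\sum_{k\in\mathcal T_\rho(\kappa),k\ne i}\Phi_{ik}(q_i)+\sum_{k\in\mathcal T_\sigma(\kappa),k\ne i}\Lambda_{ik}(q_i),\qquad \beta_i=-\sum_{k\in\mathcal T_\rho(\kappa),k\ne i}\Phi_{ik}(0)+\sum_{k\in\mathcal T_\sigma(\kappa),k\ne i}\Lambda_{ik}(0), \] \[ \gamma_i=\sum_{k\ne i}\xi_k-\sum_{k\in\mathcal T_\rho(\kappa),k\ne i}\Phi_{ik}(1)+\sum_{k\in\mathcal T_\sigma(\kappa),k\ne i}\Lambda_{ik}(1), \] \[ \Phi_{ik}(x)=\frac{q_k}{N}\Big(1+\frac{(\varrho_k-\psi_k+1)(\varrho_i+x)}{N-1}\Big),\quad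 \Lambda_{ik}(x)=\frac{q_k\psi_k(\varrho_i+x)}{N(N-1)},\quad \xi_k=\frac{\psi_k\varrho_k}{N(N-1)}, \] with all sums over $k\ne i$ ranging over $k\in\{1,\dots,M\}$.
   Context: A sender holds a frame $\mathcal N$ of $N\ge2$ packets and serves receivers $\mathcal M=\{1,\dots,M\}$. For each receiver $i$ there are sets $\mathcal H_i\subseteq\mathcal N$ (Has set: packets received), $\mathcal L_i=\mathcal N\setminus\mathcal H_i$ (Lacks set) and $\mathcal W_i\subseteq\mathcal L_i$ (Wants set: requested packets not yet received), with cardinalities $\varrho_i=|\mathcal H_i|$, $\varphi_i=N-\varrho_i$, $\psi_i=|\mathcal W_i|$. Receiver $i$ has packet erasure probability $p_i$ and success probability $q_i=1-p_i\in[0,1]$. The IDNC graph $\mathcal G$ has a primary vertex $v_{ij}$ for each $i\in\mathcal M$, $j\in\mathcal W_i$, and a secondary vertex $v_{ij}$ for each $i\in\mathcal M$, $j\in\mathcal L_i\setminus\mathcal W_i$; two distinct vertices $v_{ij},v_{kl}$ are adjacent iff (C1) $j=l$, or (C2) $j\in\mathcal H_k$ and $l\in\mathcal H_i$. The primary graph $\mathcal G_\rho$ is the subgraph induced by the primary vertices, with edge set $\mathcal E_\rho$. For a maximal clique $\kappa$ of $\mathcal G$ (each receiver has at most one vertex in it), $\mathcal T_\rho(\kappa)$ (resp. $\mathcal T_\sigma(\kappa)$) is the set of receivers having a primary (resp. secondary) vertex in $\kappa$, and $\mathcal T(\kappa)=\mathcal T_\rho(\kappa)\cup\mathcal T_\sigma(\kappa)$.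 Transmission model: when $\kappa$ is transmitted at time $t$, each $k\in\mathcal T(\kappa)$ receives it with probability $q_k$, independently; let $X_k\in\{0,1\}$ be the reception indicator. At time $t+1$ the cardinalities become $\varrho_k'=\varrho_k+X_k$ for $k\in\mathcal T(\kappa)$, $\psi_k'=\psi_k-X_k$ for $k\in\mathcal T_\rho(\kappa)$, and are otherwise unchanged. Expected degrees and edge counts are computed ignoring set contents (sets treated as uniformly random given their cardinalities): for cardinality vectors $\boldsymbol\varrho,\boldsymbol\psi$ put $D_i(\boldsymbol\varrho,\boldsymbol\psi)=\sum_{k\ne i}\frac{\psi_k}{N}\big(1+\frac{\varrho_k\varrho_i}{N-1}\big)$ (the expected primary degree of a vertex of receiver $i$). Then $\mathbb E[\Delta_i^{(t)}]=D_i(\boldsymbol\varrho,\boldsymbol\psi)$, $\mathbb E[|\mathcal E_\rho^{(t)}|]=\frac12\sum_i\psi_iD_i(\boldsymbol\varrho,\boldsymbol\psi)$, and $\mathbb E[|\mathcal E_\rho^{(t+1)}|]=\mathbb E_{X}\big[\frac12\sum_i\psi_i'D_i(\boldsymbol\varrho',\boldsymbol\psi')\big]$, the outer expectation over the independent receptions. *)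

theory Defs
  imports Complex_Main
begin

text \<open>Receivers are 1..M, packets are 1..N. H i is the Has set, W i the Wants set of
  receiver i. Vertices of the IDNC graph are pairs (i,j) (receiver, packet).\<close>

definition receivers :: "nat \<Rightarrow> nat set" where
  "receivers M = {1..M}"

definition Lacks :: "nat \<Rightarrow> (nat \<Rightarrow> nat set) \<Rightarrow> nat \<Rightarrow> nat set" where
  "Lacks N H i = {1..N} - H i"

definition idnc_vertices ::
  "nat \<Rightarrow> nat \<Rightarrow> (nat \<Rightarrow> nat set) \<Rightarrow> (nat \<times> nat) set" where
  "idnc_vertices N M H = {(i, j). i \<in> receivers M \<and> j \<in> Lacks N H i}"

definition is_primary :: "(nat \<Rightarrow> nat set) \<Rightarrow> nat \<times> nat \<Rightarrow> bool" where
  "is_primary W v = (snd v \<in> W (fst v))"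

definition idnc_adj :: "(nat \<Rightarrow> nat set) \<Rightarrow> nat \<times> nat \<Rightarrow> nat \<times> nat \<Rightarrow> bool" where
  "idnc_adj H v w = (v \<noteq> w \<and>
     (snd v = snd w \<or> (snd v \<in> H (fst w) \<and> snd w \<in> H (fst v))))"

definition is_clique ::
  "nat \<Rightarrow> nat \<Rightarrow> (nat \<Rightarrow> nat set) \<Rightarrow> (nat \<times> nat) set \<Rightarrow> bool" where
  "is_clique N M H K = (K \<subseteq> idnc_vertices N M H \<and>
     (\<forall>v\<in>K. \<forall>w\<in>K. v \<noteq> w \<longrightarrow> idnc_adj H v w))"

definition is_maximal_clique ::
  "nat \<Rightarrow> nat \<Rightarrow> (nat \<Rightarrow> nat set) \<Rightarrow> (nat \<times> nat) set \<Rightarrow> bool" where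
  "is_maximal_clique N M H K = (is_clique N M H K \<and>
     (\<forall>K'. is_clique N M H K' \<and> K \<subseteq> K' \<longrightarrow> K' = K))"

definition T_rho :: "(nat \<Rightarrow> nat set) \<Rightarrow> (nat \<times> nat) set \<Rightarrow> nat set" where
  "T_rho W K = {i. \<exists>j. (i, j) \<in> K \<and> j \<in> W i}"

definition T_sigma :: "(nat \<Rightarrow> nat set) \<Rightarrow> (nat \<times> nat) set \<Rightarrow> nat set" where
  "T_sigma W K = {i. \<exists>j. (i, j) \<in> K \<and> j \<notin> W i}"

definition T_all :: "(nat \<Rightarrow> nat set) \<Rightarrow> (nat \<times> nat) set \<Rightarrow> nat set" where
  "T_all W K = T_rho W K \<union> T_sigma W K"

definition D_deg :: "nat \<Rightarrow> nat \<Rightarrow> (nat \<Rightarrow> real) \<Rightarrow> (nat \<Rightarrow> real) \<Rightarrow> nat \<Rightarrow> real" where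
  "D_deg N M rho psi i =
     (\<Sum>k\<in>receivers M - {i}. psi k / real N * (1 + rho k * rho i / (real N - 1)))"

definition E_edges :: "nat \<Rightarrow> nat \<Rightarrow> (nat \<Rightarrow> real) \<Rightarrow> (nat \<Rightarrow> real) \<Rightarrow> real" where
  "E_edges N M rho psi = 1/2 * (\<Sum>i\<in>receivers M. psi i * D_deg N M rho psi i)"

text \<open>Expected number of primary edges at time t+1, after transmitting clique K:
  expectation over independent receptions; S is the set of receivers in T(K) with X_k = 1.\<close>
definition E_edges_next ::
  "nat \<Rightarrow> nat \<Rightarrow> (nat \<Rightarrow> nat set) \<Rightarrow> (nat \<Rightarrow> nat set) \<Rightarrow> (nat \<Rightarrow> real)
     \<Rightarrow> (nat \<times> nat) set \<Rightarrow> real" where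
  "E_edges_next N M H W q K =
     (\<Sum>S\<in>Pow (T_all W K).
        (\<Prod>k\<in>S. q k) * (\<Prod>k\<in>T_all W K - S. 1 - q k) *
        E_edges N M
          (\<lambda>k. real (card (H k)) + (if k \<in> S then 1 else 0))
          (\<lambda>k. real (card (W k)) - (if k \<in> S \<inter> T_rho W K then 1 else 0)))"

end

theory Submission
  imports Defs
begin


definition PP :: "(nat \<Rightarrow> real) \<Rightarrow> nat set \<Rightarrow> nat set \<Rightarrow> real" where
  "PP q T S = (\<Prod>k\<in>S. q k) * (\<Prod>k\<in>T - S. 1 - q k)"

lemma ET_insert:
  assumes "finite T" "a \<notin> T"
  shows "(\<Sum>S\<in>Pow (insert a T). PP q (insert a T) S * f S)
    = q a * (\<Sum>S\<in>Pow T. PP q T S * f (insert a S)) + (1 - q a) * (\<Sum>S\<in>Pow T. PP q T S * f S)"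
proof -
  have disj: "Pow T \<inter> insert a ` Pow T = {}" using assms(2) by auto
  have inj: "inj_on (insert a) (Pow T)" using assms(2) unfolding inj_on_def by (metis PowD insert_ident subsetD)
  have fin: "finite (Pow T)" using assms(1) by simp
  have p1: "PP q (insert a T) S = (1 - q a) * PP q T S" if "S \<in> Pow T" for S
  proof -
    have "insert a T - S = insert a (T - S)" using that assms by auto
    moreover have "finite (T - S)" using assms by simp
    moreover have "a \<notin> T - S" using assms by simp
    ultimately show ?thesis unfolding PP_def by simp
  qed
  have p2: "PP q (insert a T) (insert a S) = q a * PP q T S" if "S \<in> Pow T" for S
  proof -
    have "insert a T - insert a S = T - S" using that assms by auto
    moreover have "finite S" using that assms finite_subset by auto
    moreover have "a \<notin> S" using assms that by auto
    ultimately show ?thesis unfolding PP_def by simp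
  qed
  have "(\<Sum>S\<in>Pow (insert a T). PP q (insert a T) S * f S)
     = (\<Sum>S\<in>Pow T. PP q (insert a T) S * f S) + (\<Sum>S\<in>insert a ` Pow T. PP q (insert a T) S * f S)"
    unfolding Pow_insert using disj fin by (simp add: sum.union_disjoint)
  also have "(\<Sum>S\<in>insert a ` Pow T. PP q (insert a T) S * f S) = (\<Sum>S\<in>Pow T. PP q (insert a T) (insert a S) * f (insert a S))"
    using inj by (simp add: sum.reindex)
  also have "\<dots> = q a * (\<Sum>S\<in>Pow T. PP q T S * f (insert a S))"
    unfolding sum_distrib_left by (rule sum.cong[OF refl]) (simp add: p2)
  also have "(\<Sum>S\<in>Pow T. PP q (insert a T) S * f S) = (1 - q a) * (\<Sum>S\<in>Pow T. PP q T S * f S)"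
    unfolding sum_distrib_left by (rule sum.cong[OF refl]) (simp add: p1)
  finally show ?thesis by simp
qed

definition QQ :: "(nat \<Rightarrow> real) \<Rightarrow> nat set \<Rightarrow> nat \<Rightarrow> real" where
  "QQ q T i = (if i \<in> T then q i else 0)"

lemma ET_const:
  assumes "finite T" shows "(\<Sum>S\<in>Pow T. PP q T S * c) = c"
  using assms
proof (induction T rule: finite_induct)
  case empty then show ?case by (simp add: PP_def)
next
  case (insert a T)
  show ?case using ET_insert[OF insert(1,2), of q "\<lambda>_. c"] insert(3) by (simp add: algebra_simps)
qed

lemma ET_one:
  assumes "finite T"
  shows "(\<Sum>S\<in>Pow T. PP q T S * h (i \<in> S)) = QQ q T i * h True + (1 - QQ q T i) * h False"
  using assms
proof (induction T rule: finite_induct)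
  case empty then show ?case by (simp add: PP_def QQ_def)
next
  case (insert a T)
  show ?case
  proof (cases "a = i")
    case True
    have "(\<Sum>S\<in>Pow T. PP q T S * h (i \<in> S)) = (\<Sum>S\<in>Pow T. PP q T S * h False)"
      proof (rule sum.cong[OF refl])
      fix S assume "S \<in> Pow T" hence "i \<notin> S" using insert(2) True by auto
      thus "PP q T S * h (i \<in> S) = PP q T S * h False" by simp
    qed
    then show ?thesis using ET_insert[OF insert(1,2), of q "\<lambda>S. h (i \<in> S)"] True
      ET_const[OF insert(1)] by (simp add: QQ_def)
  next
    case False
    then show ?thesis using ET_insert[OF insert(1,2), of q "\<lambda>S. h (i \<in> S)"] insert(3)
      by (simp add: QQ_def algebra_simps)
  qed
qed

lemma ET_two:
  assumes "finite T" "i \<noteq> k"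
  shows "(\<Sum>S\<in>Pow T. PP q T S * g (i \<in> S) (k \<in> S)) =
     QQ q T i * QQ q T k * g True True + QQ q T i * (1 - QQ q T k) * g True False
   + (1 - QQ q T i) * QQ q T k * g False True + (1 - QQ q T i) * (1 - QQ q T k) * g False False"
  using assms(1)
proof (induction T arbitrary: g rule: finite_induct)
  case empty then show ?case by (simp add: PP_def QQ_def)
next
  case (insert a T)
  show ?case
  proof (cases "a = i")
    case True
    have e1: "(\<Sum>S\<in>Pow T. PP q T S * g (i \<in> S) (k \<in> S)) = (\<Sum>S\<in>Pow T. PP q T S * g False (k \<in> S))"
      proof (rule sum.cong[OF refl])
      fix S assume "S \<in> Pow T" hence "i \<notin> S" using insert(2) True by auto
      thus "PP q T S * g (i \<in> S) (k \<in> S) = PP q T S * g False (k \<in> S)" by simp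
    qed
    have e2: "(\<Sum>S\<in>Pow T. PP q T S * g (i \<in> insert a S) (k \<in> insert a S)) = (\<Sum>S\<in>Pow T. PP q T S * g True (k \<in> S))"
      using True assms(2) by (intro sum.cong) auto
    show ?thesis using ET_insert[OF insert(1,2), of q "\<lambda>S. g (i \<in> S) (k \<in> S)"] True e1 e2
      ET_one[OF insert(1), of q "g False" k] ET_one[OF insert(1), of q "g True" k] assms(2) insert(2)
      by (simp add: QQ_def algebra_simps)
  next
    case F1: False
    show ?thesis
    proof (cases "a = k")
      case True
      have e1: "(\<Sum>S\<in>Pow T. PP q T S * g (i \<in> S) (k \<in> S)) = (\<Sum>S\<in>Pow T. PP q T S * (\<lambda>x. g x False) (i \<in> S))"
        proof (rule sum.cong[OF refl])
      fix S assume "S \<in> Pow T" hence "k \<notin> S" using insert(2) True by auto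
      thus "PP q T S * g (i \<in> S) (k \<in> S) = PP q T S * (\<lambda>x. g x False) (i \<in> S)" by simp
    qed
      have e2: "(\<Sum>S\<in>Pow T. PP q T S * g (i \<in> insert a S) (k \<in> insert a S)) = (\<Sum>S\<in>Pow T. PP q T S * (\<lambda>x. g x True) (i \<in> S))"
        using True assms(2) by (intro sum.cong) auto
      show ?thesis using ET_insert[OF insert(1,2), of q "\<lambda>S. g (i \<in> S) (k \<in> S)"] True e1 e2
        ET_one[OF insert(1), of q "\<lambda>x. g x False" i] ET_one[OF insert(1), of q "\<lambda>x. g x True" i] assms(2) insert(2)
        by (simp add: QQ_def algebra_simps)
    next
      case False
      then show ?thesis using ET_insert[OF insert(1,2), of q "\<lambda>S. g (i \<in> S) (k \<in> S)"] insert(3)[of g] F1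
        by (simp add: QQ_def algebra_simps)
    qed
  qed
qed


lemma sres:
  assumes "finite R" "A \<subseteq> R"
  shows "(\<Sum>k\<in>A. f k) = (\<Sum>k\<in>R. if k \<in> A then f k else 0)"
proof -
  have "R \<inter> A = A" using assms(2) by blast
  then show ?thesis using sum.inter_restrict[OF assms(1), of f A] by simp
qed

lemma sdif:
  assumes "finite R" "A \<subseteq> R"
  shows "(\<Sum>k\<in>A-{i}. f k) = (\<Sum>k\<in>R. if k = i then 0 else if k \<in> A then f k else 0)"
proof -
  have "A - {i} \<subseteq> R" using assms(2) by blast
  from sres[OF assms(1) this, of f] show ?thesis
    by (rule trans) (rule sum.cong[OF refl], simp)
qed

lemma swap3: "(\<Sum>S\<in>A. c S * (\<Sum>i\<in>B. \<Sum>k\<in>C. (f S i k::real))) = (\<Sum>i\<in>B. \<Sum>k\<in>C. \<Sum>S\<in>A. c S * f S i k)"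
proof -
  have "(\<Sum>S\<in>A. c S * (\<Sum>i\<in>B. \<Sum>k\<in>C. f S i k)) = (\<Sum>S\<in>A. \<Sum>i\<in>B. \<Sum>k\<in>C. c S * f S i k)"
    by (simp add: sum_distrib_left)
  also have "\<dots> = (\<Sum>i\<in>B. \<Sum>S\<in>A. \<Sum>k\<in>C. c S * f S i k)" by (rule sum.swap)
  also have "\<dots> = (\<Sum>i\<in>B. \<Sum>k\<in>C. \<Sum>S\<in>A. c S * f S i k)" by (simp add: sum.swap[of _ A])
  finally show ?thesis .
qed

lemma ifzero: "(\<Sum>S\<in>A. c S * (if P then (0::real) else g S)) = (if P then 0 else \<Sum>S\<in>A. c S * g S)"
  by (cases P) simp_all

lemma core:
  fixes N M :: nat and rho psi q xi :: "nat \<Rightarrow> real" and Phi Lam :: "nat \<Rightarrow> nat \<Rightarrow> real \<Rightarrow> real"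
    and alpha beta gamma :: "nat \<Rightarrow> real" and Tr Ts T :: "nat set"
  assumes N2: "N \<ge> 2" and TrR: "Tr \<subseteq> receivers M" and TsR: "Ts \<subseteq> receivers M"
    and dis: "Tr \<inter> Ts = {}" and TT: "T = Tr \<union> Ts"
    and xi_def: "xi = (\<lambda>k. psi k * rho k / (real N * (real N - 1)))"
    and Phi_def: "Phi = (\<lambda>i k x. q k / real N * (1 + (rho k - psi k + 1) * (rho i + x) / (real N - 1)))"
    and Lam_def: "Lam = (\<lambda>i k x. q k * psi k * (rho i + x) / (real N * (real N - 1)))"
    and alpha_def: "alpha = (\<lambda>i. (\<Sum>k\<in>receivers M - {i}. q i * xi k)
                    - (\<Sum>k\<in>Tr - {i}. Phi i k (q i)) + (\<Sum>k\<in>Ts - {i}. Lam i k (q i)))"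
    and beta_def: "beta = (\<lambda>i. - (\<Sum>k\<in>Tr - {i}. Phi i k 0) + (\<Sum>k\<in>Ts - {i}. Lam i k 0))"
    and gamma_def: "gamma = (\<lambda>i. (\<Sum>k\<in>receivers M - {i}. xi k)
                    - (\<Sum>k\<in>Tr - {i}. Phi i k 1) + (\<Sum>k\<in>Ts - {i}. Lam i k 1))"
  shows "(\<Sum>S\<in>Pow T. (\<Prod>k\<in>S. q k) * (\<Prod>k\<in>T - S. 1 - q k) *
        E_edges N M (\<lambda>k. rho k + (if k \<in> S then 1 else 0))
          (\<lambda>k. psi k - (if k \<in> S \<inter> Tr then 1 else 0)))
     = E_edges N M rho psi
          - 1/2 * (\<Sum>i\<in>Tr. q i * (D_deg N M rho psi i + gamma i))
          + 1/2 * (\<Sum>i\<in>T. psi i * alpha i)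
          + 1/2 * (\<Sum>i\<in>receivers M - T. psi i * beta i)"
proof -
  define R where "R = receivers M"
  have finR: "finite R" unfolding R_def receivers_def by simp
  have TR: "T \<subseteq> R" using TrR TsR TT R_def by auto
  have finT: "finite T" using TR finR finite_subset by auto
  define tm where "tm = (\<lambda>i k x y. (psi i - (if x \<and> i \<in> Tr then 1 else 0)) *
     ((psi k - (if y \<and> k \<in> Tr then 1 else 0)) / real N *
      (1 + (rho k + (if y then 1 else 0)) * (rho i + (if x then 1 else 0)) / (real N - 1))))"
  have A: "E_edges N M (\<lambda>k. rho k + (if k \<in> S then 1 else 0))
          (\<lambda>k. psi k - (if k \<in> S \<inter> Tr then 1 else 0))
     = 1/2 * (\<Sum>i\<in>R. \<Sum>k\<in>R. if k = i then 0 else tm i k (i \<in> S) (k \<in> S))" for S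
    unfolding E_edges_def D_deg_def R_def[symmetric] sdif[OF finR order_refl]
    apply (rule arg_cong[where f="\<lambda>x. 1/2*x"]) apply (rule sum.cong[OF refl])
    apply (subst sum_distrib_left) apply (rule sum.cong[OF refl]) by (simp add: tm_def)
  have B: "(\<Sum>S\<in>Pow T. (\<Prod>k\<in>S. q k) * (\<Prod>k\<in>T - S. 1 - q k) *
        E_edges N M (\<lambda>k. rho k + (if k \<in> S then 1 else 0))
          (\<lambda>k. psi k - (if k \<in> S \<inter> Tr then 1 else 0)))
     = 1/2 * (\<Sum>i\<in>R. \<Sum>k\<in>R. if k = i then 0 else
          (\<Sum>S\<in>Pow T. PP q T S * tm i k (i \<in> S) (k \<in> S)))"
  proof -
    have "(\<Sum>S\<in>Pow T. PP q T S * (1/2 * (\<Sum>i\<in>R. \<Sum>k\<in>R. if k = i then 0 else tm i k (i \<in> S) (k \<in> S))))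
      = 1/2 * (\<Sum>S\<in>Pow T. PP q T S * (\<Sum>i\<in>R. \<Sum>k\<in>R. if k = i then 0 else tm i k (i \<in> S) (k \<in> S)))"
      by (simp add: sum_distrib_left mult.left_commute)
    also have "\<dots> = 1/2 * (\<Sum>i\<in>R. \<Sum>k\<in>R. \<Sum>S\<in>Pow T. PP q T S * (if k = i then 0 else tm i k (i \<in> S) (k \<in> S)))"
      by (simp only: swap3)
    finally show ?thesis unfolding A PP_def[symmetric] by (simp add: ifzero)
  qed
  have TrR': "Tr \<subseteq> R" and TsR': "Ts \<subseteq> R" using TrR TsR R_def by auto
  have RT: "R - T \<subseteq> R" by auto
  have N0: "real N \<noteq> 0" and N1: "real N - 1 \<noteq> 0" using N2 by auto
  define d where "d = (\<lambda>i k. psi k / real N * (1 + rho k * rho i / (real N - 1)))"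
  define G where "G = (\<lambda>i k. xi k - (if k\<in>Tr then Phi i k 1 else 0) + (if k\<in>Ts then Lam i k 1 else 0))"
  define Al where "Al = (\<lambda>i k. q i * xi k - (if k\<in>Tr then Phi i k (q i) else 0) + (if k\<in>Ts then Lam i k (q i) else 0))"
  define Be where "Be = (\<lambda>i k. - (if k\<in>Tr then Phi i k 0 else 0) + (if k\<in>Ts then Lam i k 0 else 0))"
  define c1 where "c1 = (\<lambda>i. if i \<in> Tr then q i else 0)"
  define c2 where "c2 = (\<lambda>i. if i \<in> T then psi i else 0)"
  define c3 where "c3 = (\<lambda>i. if i \<notin> T then psi i else 0)"
  define st where "st = (\<lambda>i k. psi i * d i k - c1 i * (d i k + G i k) + c2 i * Al i k + c3 i * Be i k)"
  define Fk where "Fk = (\<lambda>i k. QQ q T i * QQ q T k * tm i k True True + QQ q T i * (1 - QQ q T k) * tm i k True False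
   + (1 - QQ q T i) * QQ q T k * tm i k False True + (1 - QQ q T i) * (1 - QQ q T k) * tm i k False False)"
  have Dd: "D_deg N M rho psi i = (\<Sum>k\<in>R. if k = i then 0 else d i k)" for i
    unfolding D_deg_def R_def[symmetric] sdif[OF finR order_refl] d_def by (rule sum.cong) auto
  have gam: "gamma i = (\<Sum>k\<in>R. if k = i then 0 else G i k)" for i
    unfolding gamma_def R_def[symmetric] sdif[OF finR order_refl] sdif[OF finR TrR'] sdif[OF finR TsR']
      sum_subtractf[symmetric] sum.distrib[symmetric]
    by (rule sum.cong) (auto simp: G_def)
  have alp: "alpha i = (\<Sum>k\<in>R. if k = i then 0 else Al i k)" for i
    unfolding alpha_def R_def[symmetric] sdif[OF finR order_refl] sdif[OF finR TrR'] sdif[OF finR TsR']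
      sum_subtractf[symmetric] sum.distrib[symmetric]
    by (rule sum.cong) (auto simp: Al_def)
  have bet: "beta i = (\<Sum>k\<in>R. if k = i then 0 else Be i k)" for i
    unfolding beta_def R_def[symmetric] sdif[OF finR TrR'] sdif[OF finR TsR']
      sum_negf[symmetric] sum.distrib[symmetric]
    by (rule sum.cong) (auto simp: Be_def)
  have peri: "psi i * D_deg N M rho psi i - c1 i * (D_deg N M rho psi i + gamma i) + c2 i * alpha i + c3 i * beta i
     = (\<Sum>k\<in>R. if k = i then 0 else st i k)" for i
  proof -
    have "(\<Sum>k\<in>R. if k = i then 0 else st i k) = (\<Sum>k\<in>R. psi i * (if k = i then 0 else d i k)
       - c1 i * ((if k = i then 0 else d i k) + (if k = i then 0 else G i k))
       + c2 i * (if k = i then 0 else Al i k) + c3 i * (if k = i then 0 else Be i k))"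
      by (rule sum.cong) (auto simp: st_def)
    also have "\<dots> = psi i * D_deg N M rho psi i - c1 i * (D_deg N M rho psi i + gamma i) + c2 i * alpha i + c3 i * beta i"
      unfolding Dd gam alp bet by (simp add: sum.distrib sum_subtractf sum_distrib_left distrib_left)
    finally show ?thesis by simp
  qed
  have D: "E_edges N M rho psi
          - 1/2 * (\<Sum>i\<in>Tr. q i * (D_deg N M rho psi i + gamma i))
          + 1/2 * (\<Sum>i\<in>T. psi i * alpha i)
          + 1/2 * (\<Sum>i\<in>receivers M - T. psi i * beta i)
      = 1/2 * (\<Sum>i\<in>R. \<Sum>k\<in>R. if k = i then 0 else st i k)"
  proof -
    have e1: "(\<Sum>i\<in>Tr. q i * (D_deg N M rho psi i + gamma i)) = (\<Sum>i\<in>R. c1 i * (D_deg N M rho psi i + gamma i))"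
      unfolding sres[OF finR TrR'] by (rule sum.cong) (auto simp: c1_def)
    have e2: "(\<Sum>i\<in>T. psi i * alpha i) = (\<Sum>i\<in>R. c2 i * alpha i)"
      unfolding sres[OF finR TR] by (rule sum.cong) (auto simp: c2_def)
    have e3: "(\<Sum>i\<in>R - T. psi i * beta i) = (\<Sum>i\<in>R. c3 i * beta i)"
      unfolding sres[OF finR RT] by (rule sum.cong) (auto simp: c3_def)
    show ?thesis unfolding E_edges_def R_def[symmetric] e1 e2 e3 peri[symmetric]
      by (simp add: sum.distrib sum_subtractf algebra_simps)
  qed
  have NN: "real N * real N - real N \<noteq> 0" using N0 N1 by (metis mult_eq_0_iff right_diff_distrib mult_1_right)
  obtain n1 where n1: "real N = n1 + 1" "n1 \<noteq> 0" "n1 + 1 \<noteq> 0" using N0 N1 by (metis diff_add_cancel)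
  have n1b: "n1 + n1 * n1 \<noteq> 0" "n1 * n1 + n1 \<noteq> 0" using n1 by (metis distrib_left mult_1_right mult_eq_0_iff add.commute)+
  have E: "st i k + st k i = 2 * Fk i k" if "k \<noteq> i" for i k
  proof -
    have si: "(i\<in>Tr \<and> i\<notin>Ts) \<or> (i\<notin>Tr \<and> i\<in>Ts) \<or> (i\<notin>Tr \<and> i\<notin>Ts)" using dis by blast
    have sk: "(k\<in>Tr \<and> k\<notin>Ts) \<or> (k\<notin>Tr \<and> k\<in>Ts) \<or> (k\<notin>Tr \<and> k\<notin>Ts)" using dis by blast
    show ?thesis
      using si sk unfolding st_def Fk_def QQ_def TT d_def G_def Al_def Be_def c1_def c2_def c3_def
        tm_def xi_def Phi_def Lam_def divide_inverse inverse_mult_distrib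
      apply (elim disjE conjE)
      apply (simp_all only: if_True if_False Un_iff simp_thms)
      apply (algebra)+
      done
  qed
  have C: "(\<Sum>S\<in>Pow T. PP q T S * tm i k (i \<in> S) (k \<in> S)) = Fk i k" if "k \<noteq> i" for i k
    unfolding Fk_def using ET_two[OF finT, of i k q "tm i k"] that by simp
  have L: "(\<Sum>i\<in>R. \<Sum>k\<in>R. if k = i then 0 else
          (\<Sum>S\<in>Pow T. PP q T S * tm i k (i \<in> S) (k \<in> S))) = (\<Sum>i\<in>R. \<Sum>k\<in>R. if k = i then 0 else Fk i k)"
    by (intro sum.cong refl) (auto simp: C)
  have sym: "(\<Sum>i\<in>R. \<Sum>k\<in>R. if k = i then 0 else st k i) = (\<Sum>i\<in>R. \<Sum>k\<in>R. if k = i then 0 else st i k)"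
    by (subst sum.swap) (intro sum.cong refl, auto)
  have "2 * (\<Sum>i\<in>R. \<Sum>k\<in>R. if k = i then 0 else Fk i k)
      = (\<Sum>i\<in>R. \<Sum>k\<in>R. (if k = i then 0 else st i k) + (if k = i then 0 else st k i))"
    unfolding sum_distrib_left by (intro sum.cong refl) (auto simp: E)
  also have "\<dots> = 2 * (\<Sum>i\<in>R. \<Sum>k\<in>R. if k = i then 0 else st i k)"
    by (simp only: sum.distrib sym)
  finally have "(\<Sum>i\<in>R. \<Sum>k\<in>R. if k = i then 0 else Fk i k) = (\<Sum>i\<in>R. \<Sum>k\<in>R. if k = i then 0 else st i k)"
    by simp
  then show ?thesis unfolding B L D by simp
qed

theorem theorem1:
  fixes N M :: nat and H W :: "nat \<Rightarrow> nat set" and q :: "nat \<Rightarrow> real"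
    and K :: "(nat \<times> nat) set"
  assumes "N \<ge> 2"
    and "\<forall>i\<in>receivers M. H i \<subseteq> {1..N}"
    and "\<forall>i\<in>receivers M. W i \<subseteq> Lacks N H i"
    and "\<forall>i\<in>receivers M. 0 \<le> q i \<and> q i \<le> 1"
    and "is_maximal_clique N M H K"
  shows
    "let rho = (\<lambda>k. real (card (H k)));
         psi = (\<lambda>k. real (card (W k)));
         Tr = T_rho W K; Ts = T_sigma W K; T = T_all W K;
         xi = (\<lambda>k. psi k * rho k / (real N * (real N - 1)));
         Phi = (\<lambda>i k x. q k / real N * (1 + (rho k - psi k + 1) * (rho i + x) / (real N - 1)));
         Lambda = (\<lambda>i k x. q k * psi k * (rho i + x) / (real N * (real N - 1)));
         alpha = (\<lambda>i. (\<Sum>k\<in>receivers M - {i}. q i * xi k)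
                    - (\<Sum>k\<in>Tr - {i}. Phi i k (q i)) + (\<Sum>k\<in>Ts - {i}. Lambda i k (q i)));
         beta = (\<lambda>i. - (\<Sum>k\<in>Tr - {i}. Phi i k 0) + (\<Sum>k\<in>Ts - {i}. Lambda i k 0));
         gamma = (\<lambda>i. (\<Sum>k\<in>receivers M - {i}. xi k)
                    - (\<Sum>k\<in>Tr - {i}. Phi i k 1) + (\<Sum>k\<in>Ts - {i}. Lambda i k 1))
     in E_edges_next N M H W q K =
          E_edges N M rho psi
          - 1/2 * (\<Sum>i\<in>Tr. q i * (D_deg N M rho psi i + gamma i))
          + 1/2 * (\<Sum>i\<in>T. psi i * alpha i)
          + 1/2 * (\<Sum>i\<in>receivers M - T. psi i * beta i)"
proof -
  have Ksub: "K \<subseteq> idnc_vertices N M H" and Kadj: "\<forall>v\<in>K. \<forall>w\<in>K. v \<noteq> w \<longrightarrow> idnc_adj H v w"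
    using assms(5) unfolding is_maximal_clique_def is_clique_def by auto
  have TrR: "T_rho W K \<subseteq> receivers M" using Ksub unfolding T_rho_def idnc_vertices_def by auto
  have TsR: "T_sigma W K \<subseteq> receivers M" using Ksub unfolding T_sigma_def idnc_vertices_def by auto
  have dis: "T_rho W K \<inter> T_sigma W K = {}"
  proof (rule ccontr)
    assume "T_rho W K \<inter> T_sigma W K \<noteq> {}"
    then obtain i j l where ij: "(i, j) \<in> K" "j \<in> W i" and il: "(i, l) \<in> K" "l \<notin> W i"
      unfolding T_rho_def T_sigma_def by auto
    have jl: "j \<noteq> l" using ij il by auto
    have "idnc_adj H (i, j) (i, l)" using Kadj ij(1) il(1) jl by auto
    hence "j \<in> H i" using jl unfolding idnc_adj_def by auto
    moreover have "j \<in> Lacks N H i" using Ksub ij(1) unfolding idnc_vertices_def by auto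
    ultimately show False unfolding Lacks_def by auto
  qed
  show ?thesis
    unfolding Let_def E_edges_next_def
    by (rule core[where rho="\<lambda>k. real (card (H k))" and psi="\<lambda>k. real (card (W k))" and q=q
        and Tr="T_rho W K" and Ts="T_sigma W K" and T="T_all W K"
        and xi="\<lambda>k. real (card (W k)) * real (card (H k)) / (real N * (real N - 1))"
        and Phi="\<lambda>i k x. q k / real N * (1 + (real (card (H k)) - real (card (W k)) + 1) * (real (card (H i)) + x) / (real N - 1))"
        and Lam="\<lambda>i k x. q k * real (card (W k)) * (real (card (H i)) + x) / (real N * (real N - 1))", OF assms(1) TrR TsR dis T_all_def])
      (rule refl)+
qed

end
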